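(* Let $X$ be a continuum, let $n\geq 2$ be an integer, and let $f:X\to X$ be a map. Consider the statements: (1) $f$ is cofinitely sensitive; (2) $F_n(f)$ is cofinitely sensitive; (3) $SF_n(f)$ is cofinitely sensitive. Then (1) and (2) are equivalent, and (3) implies (2).
   Context: A continuum is a nonempty compact connected metric space $(X,d)$. For $n\in\mathbb{N}$, $F_n(X)$ is the set of nonempty subsets of $X$ with at most $n$ points, with the Hausdorff metric $d_H$; $F_1(X)=\{\{x\}:x\in X\}$. For $f:X\to X$, $F_n(f)(A)=f(A)$. For $n\geq 2$, $SF_n(X)=F_n(X)/F_1(X)$ (collapsing $F_1(X)$ to a point), $q:F_n(X)\to SF_n(X)$ the quotient map, $F_X=q(F_1(X))$, and $SF_n(f)(\chi)=q(F_n(f)(q^{-1}(\chi)))$ if $\chi\neq F_X$, $SF_n(f)(F_X)=F_X$. $SF_n(X)$ carries the metric $\rho(\chi_1,\chi_2)=\mathcal{H}^2(F_1(X)\cup q^{-1}(\chi_1),F_1(X)\cup q^{-1}(\chi_2))$, with $\mathcal{H}^2$ the Hausdorff metric on closed subsets of $F_n(X)$ induced by $d_H$. A map $g$ on a metric space $(Z,D)$ is cofinitely sensitive if there exist $\delta>0$ and $N\in\mathbb{N}$ such that for every nonempty open $U\subseteq Z$ and every $m>N$ there exist $x,y\in U$ with $D(g^m(x),g^m(y))>\delta$ (with $D=d,d_H,\rho$ for $f,F_n(f),SF_n(f)$). *)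

theory Defs
  imports "HOL-Analysis.Analysis"
begin

text \<open>Hausdorff distance between two nonempty compact subsets, induced by a
  distance function D (used only on nonempty compact sets, where Sup/Inf are
  the usual ones).\<close>
definition hdist :: "('b \<Rightarrow> 'b \<Rightarrow> real) \<Rightarrow> 'b set \<Rightarrow> 'b set \<Rightarrow> real" where
  "hdist D A B = max (SUP a\<in>A. INF b\<in>B. D a b) (SUP b\<in>B. INF a\<in>A. D a b)"

definition dH :: "'a::metric_space set \<Rightarrow> 'a set \<Rightarrow> real" where
  "dH A B = hdist dist A B"

definition Fn :: "nat \<Rightarrow> 'a set \<Rightarrow> 'a set set" where
  "Fn n X = {A. A \<subseteq> X \<and> A \<noteq> {} \<and> finite A \<and> card A \<le> n}"

definition F1 :: "'a set \<Rightarrow> 'a set set" where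
  "F1 X = {{x} | x. x \<in> X}"

text \<open>Quotient F_n(X)/F_1(X): the class of A is F_1(X) if A is a singleton,
  otherwise the singleton class {A}.  Thus q^{-1}(chi) = chi.\<close>
definition qmap :: "'a set \<Rightarrow> 'a set \<Rightarrow> 'a set set" where
  "qmap X A = (if A \<in> F1 X then F1 X else {A})"

definition SFn :: "nat \<Rightarrow> 'a set \<Rightarrow> 'a set set set" where
  "SFn n X = qmap X ` Fn n X"

definition rho :: "'a::metric_space set \<Rightarrow> 'a set set \<Rightarrow> 'a set set \<Rightarrow> real" where
  "rho X c1 c2 = hdist dH (F1 X \<union> c1) (F1 X \<union> c2)"

definition Fnf :: "('a \<Rightarrow> 'a) \<Rightarrow> 'a set \<Rightarrow> 'a set" where
  "Fnf f A = f ` A"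

definition SFnf :: "'a set \<Rightarrow> ('a \<Rightarrow> 'a) \<Rightarrow> 'a set set \<Rightarrow> 'a set set" where
  "SFnf X f c = (if c = F1 X then F1 X else qmap X (Fnf f (\<Union>c)))"

definition D_open :: "'b set \<Rightarrow> ('b \<Rightarrow> 'b \<Rightarrow> real) \<Rightarrow> 'b set \<Rightarrow> bool" where
  "D_open Z D U \<longleftrightarrow> U \<subseteq> Z \<and> (\<forall>x\<in>U. \<exists>e>0. \<forall>y\<in>Z. D x y < e \<longrightarrow> y \<in> U)"

definition cofinitely_sensitive :: "'b set \<Rightarrow> ('b \<Rightarrow> 'b \<Rightarrow> real) \<Rightarrow> ('b \<Rightarrow> 'b) \<Rightarrow> bool" where
  "cofinitely_sensitive Z D g \<longleftrightarrow>
     (\<exists>\<delta>>0. \<exists>N::nat. \<forall>U. D_open Z D U \<and> U \<noteq> {} \<longrightarrow>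
        (\<forall>m>N. \<exists>x\<in>U. \<exists>y\<in>U. D ((g ^^ m) x) ((g ^^ m) y) > \<delta>))"

end

theory Submission
  imports Defs
begin

lemma dH_fin:
  assumes "finite A" "A \<noteq> {}" "finite B" "B \<noteq> {}"
  shows "dH A B = max (Max ((\<lambda>a. Min ((\<lambda>b. dist a b) ` B)) ` A))
                      (Max ((\<lambda>b. Min ((\<lambda>a. dist a b) ` A)) ` B))"
  using assms by (simp add: dH_def hdist_def cSup_eq_Max cInf_eq_Min)

lemma dH_less:
  assumes "finite A" "A \<noteq> {}" "finite B" "B \<noteq> {}"
    and "\<forall>a\<in>A. \<exists>b\<in>B. dist a b < e" and "\<forall>b\<in>B. \<exists>a\<in>A. dist a b < e"
  shows "dH A B < e"
  using assms by (simp add: dH_fin Min_less_iff)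

lemma dH_lessD1:
  assumes "finite A" "A \<noteq> {}" "finite B" "B \<noteq> {}" "dH A B < e" "b \<in> B"
  shows "\<exists>a\<in>A. dist a b < e"
  using assms by (simp add: dH_fin Min_less_iff)

lemma dH_gtD:
  assumes "finite A" "A \<noteq> {}" "finite B" "B \<noteq> {}" "dH A B > e"
  shows "(\<exists>a\<in>A. \<forall>b\<in>B. dist a b > e) \<or> (\<exists>b\<in>B. \<forall>a\<in>A. dist a b > e)"
  using assms by (simp add: dH_fin less_max_iff_disj Max_gr_iff Min_gr_iff)

lemma dH_geI:
  assumes "finite A" "A \<noteq> {}" "finite B" "B \<noteq> {}" "a \<in> A" "\<forall>b\<in>B. c \<le> dist a b"
  shows "c \<le> dH A B"
  using assms by (simp add: dH_fin le_max_iff_disj Max_ge_iff) blast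

lemma dH_gtI:
  assumes "finite A" "A \<noteq> {}" "finite B" "B \<noteq> {}" "a \<in> A" "\<forall>b\<in>B. c < dist a b"
  shows "c < dH A B"
  using assms by (simp add: dH_fin less_max_iff_disj Max_gr_iff) blast

lemma dH_nonneg:
  assumes "finite A" "A \<noteq> {}" "finite B" "B \<noteq> {}"
  shows "0 \<le> dH A B"
proof -
  obtain a where "a \<in> A" using assms by blast
  then show ?thesis using dH_geI[OF assms \<open>a\<in>A\<close>, of 0] by simp
qed

lemma dH_self:
  assumes "finite A" "A \<noteq> {}"
  shows "dH A A = 0"
proof -
  have "\<not> dH A A > 0"
  proof
    assume "dH A A > 0"
    from dH_gtD[OF assms assms this] show False by auto
  qed
  with dH_nonneg[OF assms assms] show ?thesis by simp
qed

lemma bdd0: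
  fixes g :: "'b \<Rightarrow> real"
  assumes "\<And>x. x \<in> S \<Longrightarrow> 0 \<le> g x"
  shows "bdd_below (g ` S)"
proof (rule bdd_belowI[of _ 0])
  fix y assume "y \<in> g ` S"
  then obtain x where "x \<in> S" "y = g x" by blast
  then show "0 \<le> y" using assms by simp
qed

lemma hdist_le_gen:
  assumes "A \<noteq> {}" "B \<noteq> {}" "\<forall>a\<in>A. \<forall>b\<in>B. 0 \<le> D a b"
    and "\<forall>a\<in>A. \<exists>b\<in>B. D a b \<le> e" and "\<forall>b\<in>B. \<exists>a\<in>A. D a b \<le> e"
  shows "hdist D A B \<le> e"
proof -
  have 1: "(SUP a\<in>A. INF b\<in>B. D a b) \<le> e"
  proof (rule cSUP_least[OF assms(1)])
    fix a assume a: "a \<in> A"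
    then obtain b where b: "b \<in> B" "D a b \<le> e" using assms(4) by blast
    have "bdd_below ((\<lambda>b. D a b) ` B)" by (rule bdd0) (use assms(3) a in blast)
    then have "(INF b\<in>B. D a b) \<le> D a b" using cINF_lower[OF _ b(1)] by blast
    then show "(INF b\<in>B. D a b) \<le> e" using b by linarith
  qed
  have 2: "(SUP b\<in>B. INF a\<in>A. D a b) \<le> e"
  proof (rule cSUP_least[OF assms(2)])
    fix b assume b: "b \<in> B"
    then obtain a where a: "a \<in> A" "D a b \<le> e" using assms(5) by blast
    have "bdd_below ((\<lambda>a. D a b) ` A)" by (rule bdd0) (use assms(3) b in blast)
    then have "(INF a\<in>A. D a b) \<le> D a b" using cINF_lower[OF _ a(1)] by blast
    then show "(INF a\<in>A. D a b) \<le> e" using a by linarith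
  qed
  show ?thesis using 1 2 by (simp add: hdist_def)
qed

lemma hdist_ge_gen:
  assumes "a \<in> A" "\<forall>a\<in>A. \<forall>b\<in>B. 0 \<le> D a b" "\<forall>a\<in>A. \<exists>b\<in>B. D a b \<le> c"
  shows "(INF b\<in>B. D a b) \<le> hdist D A B"
proof -
  have "bdd_above ((\<lambda>a. INF b\<in>B. D a b) ` A)"
  proof (rule bdd_aboveI[of _ c], clarsimp)
    fix a' assume a': "a' \<in> A"
    then obtain b where b: "b \<in> B" "D a' b \<le> c" using assms(3) by blast
    have "bdd_below ((\<lambda>b. D a' b) ` B)" by (rule bdd0) (use assms(2) a' in blast)
    then have "(INF b\<in>B. D a' b) \<le> D a' b" using cINF_lower[OF _ b(1)] by blast
    then show "(INF b\<in>B. D a' b) \<le> c" using b by linarith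
  qed
  then have "(INF b\<in>B. D a b) \<le> (SUP a\<in>A. INF b\<in>B. D a b)" using cSUP_upper[OF assms(1)] by blast
  then show ?thesis by (simp add: hdist_def)
qed


lemma Fnf_iter: "(Fnf f ^^ m) A = (f ^^ m) ` A"
  by (induction m arbitrary: A) (auto simp: Fnf_def image_comp)

lemma funpow_in: "f ` X \<subseteq> X \<Longrightarrow> x \<in> X \<Longrightarrow> (f ^^ m) x \<in> X"
  by (induction m) auto

lemma F1_mem: "A \<in> F1 X \<longleftrightarrow> (\<exists>x\<in>X. A = {x})"
  by (auto simp: F1_def)

lemma SFnf_iter:
  assumes "f ` X \<subseteq> X" "A \<subseteq> X"
  shows "(SFnf X f ^^ m) (qmap X A) = qmap X ((f ^^ m) ` A)"
proof (induction m)
  case 0 then show ?case by simp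
next
  case (Suc m)
  define A' where "A' = (f ^^ m) ` A"
  have sub: "A' \<subseteq> X" using funpow_in[OF assms(1)] assms(2) by (auto simp: A'_def)
  have eq: "(f ^^ Suc m) ` A = f ` A'" by (simp add: A'_def image_comp)
  show ?case
  proof (cases "A' \<in> F1 X")
    case True
    then obtain x where x: "x \<in> X" "A' = {x}" by (auto simp: F1_mem)
    have "f ` A' \<in> F1 X" using x assms(1) by (auto simp: F1_mem)
    then show ?thesis using Suc True eq by (simp add: A'_def[symmetric] qmap_def SFnf_def)
  next
    case False
    have ne: "{A'} \<noteq> F1 X" using False by (metis singletonI)
    show ?thesis using Suc False eq ne by (simp add: A'_def[symmetric] qmap_def SFnf_def Fnf_def)
  qed
qed

lemma D_open_ball:
  assumes "e > 0" "a \<in> X"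
  shows "D_open X dist {y\<in>X. dist a y < e}"
  unfolding D_open_def
proof (intro conjI ballI)
  fix y assume y: "y \<in> {y\<in>X. dist a y < e}"
  show "\<exists>e'>0. \<forall>w\<in>X. dist y w < e' \<longrightarrow> w \<in> {y\<in>X. dist a y < e}"
  proof (intro exI[of _ "e - dist a y"] conjI ballI impI)
    show "e - dist a y > 0" using y by simp
    fix w assume "w \<in> X" "dist y w < e - dist a y"
    then show "w \<in> {y\<in>X. dist a y < e}" using dist_triangle[of a w y] by simp
  qed
qed auto

lemma F1_union_qmap: "F1 X \<union> qmap X P = F1 X \<union> {P}"
  by (auto simp: qmap_def)

lemma F1_fin: "Y \<in> F1 X \<Longrightarrow> finite Y \<and> Y \<noteq> {}"
  by (auto simp: F1_def)

lemma rho_le: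
  assumes "finite P" "P \<noteq> {}" "finite Q" "Q \<noteq> {}"
  shows "rho X (qmap X P) (qmap X Q) \<le> dH P Q"
  unfolding rho_def F1_union_qmap
proof (rule hdist_le_gen)
  have fin: "\<And>Y. Y \<in> F1 X \<union> {P} \<union> (F1 X \<union> {Q}) \<Longrightarrow> finite Y \<and> Y \<noteq> {}"
    using assms F1_fin by blast
  show "\<forall>a\<in>F1 X \<union> {P}. \<forall>b\<in>F1 X \<union> {Q}. 0 \<le> dH a b"
    using fin dH_nonneg by (metis UnI1 UnI2)
  have nn: "0 \<le> dH P Q" using dH_nonneg assms by blast
  show "\<forall>a\<in>F1 X \<union> {P}. \<exists>b\<in>F1 X \<union> {Q}. dH a b \<le> dH P Q"
  proof
    fix a assume a: "a \<in> F1 X \<union> {P}"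
    show "\<exists>b\<in>F1 X \<union> {Q}. dH a b \<le> dH P Q"
    proof (cases "a \<in> F1 X")
      case True
      then have "dH a a = 0" using dH_self F1_fin by blast
      then show ?thesis using True nn by (intro bexI[of _ a]) auto
    next
      case False
      then show ?thesis using a by (intro bexI[of _ Q]) auto
    qed
  qed
  show "\<forall>b\<in>F1 X \<union> {Q}. \<exists>a\<in>F1 X \<union> {P}. dH a b \<le> dH P Q"
  proof
    fix b assume b: "b \<in> F1 X \<union> {Q}"
    show "\<exists>a\<in>F1 X \<union> {P}. dH a b \<le> dH P Q"
    proof (cases "b \<in> F1 X")
      case True
      then have "dH b b = 0" using dH_self F1_fin by blast
      then show ?thesis using True nn by (intro bexI[of _ b]) auto
    next
      case False
      then show ?thesis using b by (intro bexI[of _ P]) auto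
    qed
  qed
  show "F1 X \<union> {P} \<noteq> {}" by blast
  show "F1 X \<union> {Q} \<noteq> {}" by blast
qed

lemma rho_gt:
  assumes "finite B" "b1 \<in> B" "b2 \<in> B" "b1 \<noteq> b2" "finite C" "C \<noteq> {}"
    and "rho X {B} (qmap X C) < e" "e \<le> dist b1 b2 / 2"
  shows "dH B C < e \<and> C \<notin> F1 X"
proof -
  have Bne: "B \<noteq> {}" using assms by auto
  have far: "dist b1 b2 / 2 \<le> dH B {x}" for x
  proof -
    have "dist b1 x \<le> dH B {x}" using dH_geI[OF assms(1) Bne, of "{x}" b1 "dist b1 x"] assms by simp
    moreover have "dist b2 x \<le> dH B {x}" using dH_geI[OF assms(1) Bne, of "{x}" b2 "dist b2 x"] assms by simp
    moreover have "dist b1 b2 \<le> dist b1 x + dist b2 x" by (simp add: dist_triangle2)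
    ultimately show ?thesis by linarith
  qed
  have fin: "\<And>Y. Y \<in> F1 X \<union> {B} \<union> (F1 X \<union> {C}) \<Longrightarrow> finite Y \<and> Y \<noteq> {}"
    using assms Bne F1_fin by blast
  have nn: "\<forall>a\<in>F1 X \<union> {B}. \<forall>b\<in>F1 X \<union> {C}. 0 \<le> dH a b"
    using fin dH_nonneg by (metis UnI1 UnI2)
  have nn2: "0 \<le> dH B C" using dH_nonneg assms Bne by blast
  have ex: "\<forall>a\<in>F1 X \<union> {B}. \<exists>b\<in>F1 X \<union> {C}. dH a b \<le> max 0 (dH B C)"
  proof
    fix a assume a: "a \<in> F1 X \<union> {B}"
    show "\<exists>b\<in>F1 X \<union> {C}. dH a b \<le> max 0 (dH B C)"
    proof (cases "a \<in> F1 X")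
      case True
      then have "dH a a = 0" using dH_self F1_fin by blast
      then show ?thesis using True by (intro bexI[of _ a]) auto
    next
      case False
      then show ?thesis using a by (intro bexI[of _ C]) auto
    qed
  qed
  have "(INF Y\<in>F1 X \<union> {C}. dH B Y) \<le> rho X {B} (qmap X C)"
    unfolding rho_def F1_union_qmap using hdist_ge_gen[OF _ nn ex] by blast
  then have "(INF Y\<in>F1 X \<union> {C}. dH B Y) < e" using assms by linarith
  moreover have "bdd_below ((\<lambda>Y. dH B Y) ` (F1 X \<union> {C}))"
    by (rule bdd0) (use nn in blast)
  ultimately obtain Y where Y: "Y \<in> F1 X \<union> {C}" "dH B Y < e"
    using cInf_less_iff[of "(\<lambda>Y. dH B Y) ` (F1 X \<union> {C})" e] by auto
  have "Y \<notin> F1 X"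
  proof
    assume "Y \<in> F1 X"
    then obtain x where "Y = {x}" by (auto simp: F1_def)
    then have "dH B {x} < e" using Y by simp
    then show False using far[of x] assms(8) by linarith
  qed
  moreover have "Y = C" using Y(1) \<open>Y \<notin> F1 X\<close> by blast
  ultimately show ?thesis using Y(2) by simp
qed


lemma FnD: "A \<in> Fn n X \<Longrightarrow> finite A \<and> A \<noteq> {} \<and> A \<subseteq> X \<and> card A \<le> n"
  by (simp add: Fn_def)

lemma dir12:
  assumes "cofinitely_sensitive X dist f"
  shows "cofinitely_sensitive (Fn n X) dH (Fnf f)"
proof -
  obtain \<delta> N where \<delta>: "\<delta> > 0" and H: "\<forall>U. D_open X dist U \<and> U \<noteq> {} \<longrightarrow>
        (\<forall>m>N. \<exists>x\<in>U. \<exists>y\<in>U. dist ((f ^^ m) x) ((f ^^ m) y) > \<delta>)"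
    using assms unfolding cofinitely_sensitive_def by blast
  show ?thesis unfolding cofinitely_sensitive_def
  proof (intro exI[of _ "\<delta>/4"] conjI exI[of _ N] allI impI)
    show "\<delta>/4 > 0" using \<delta> by simp
    fix U m assume U: "D_open (Fn n X) dH U \<and> U \<noteq> {}" and m: "N < m"
    obtain A where A: "A \<in> U" using U by blast
    have AF: "A \<in> Fn n X" using U A unfolding D_open_def by blast
    obtain \<epsilon> where \<epsilon>: "\<epsilon> > 0" "\<forall>B\<in>Fn n X. dH A B < \<epsilon> \<longrightarrow> B \<in> U"
      using U A unfolding D_open_def by blast
    have Afin: "finite A" "A \<noteq> {}" "A \<subseteq> X" "card A \<le> n" using FnD[OF AF] by auto
    obtain a1 where a1: "a1 \<in> A" using Afin by blast
    define p where "p = (f ^^ m) a1"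
    have "\<forall>a\<in>A. \<exists>z. z \<in> X \<and> dist a z < \<epsilon> \<and> dist ((f ^^ m) z) p > \<delta>/2"
    proof
      fix a assume a: "a \<in> A"
      have aX: "a \<in> X" using a Afin by blast
      have "D_open X dist {y\<in>X. dist a y < \<epsilon>}" using D_open_ball \<epsilon>(1) aX by blast
      moreover have "{y\<in>X. dist a y < \<epsilon>} \<noteq> {}" using aX \<epsilon>(1) by auto
      ultimately obtain x y where xy: "x \<in> {y\<in>X. dist a y < \<epsilon>}" "y \<in> {y\<in>X. dist a y < \<epsilon>}"
          "dist ((f ^^ m) x) ((f ^^ m) y) > \<delta>" using H m by blast
      have "dist ((f ^^ m) x) ((f ^^ m) y) \<le> dist ((f ^^ m) x) p + dist ((f ^^ m) y) p"
        by (rule dist_triangle2)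
      then have "dist ((f ^^ m) x) p > \<delta>/2 \<or> dist ((f ^^ m) y) p > \<delta>/2" using xy(3) by linarith
      then show "\<exists>z. z \<in> X \<and> dist a z < \<epsilon> \<and> dist ((f ^^ m) z) p > \<delta>/2" using xy(1,2) by blast
    qed
    then obtain z where z: "\<forall>a\<in>A. z a \<in> X \<and> dist a (z a) < \<epsilon> \<and> dist ((f ^^ m) (z a)) p > \<delta>/2"
      by metis
    define g where "g a = (if dist ((f ^^ m) a) p \<le> \<delta>/4 then z a else a)" for a
    define B where "B = g ` A"
    have gA: "\<forall>a\<in>A. g a \<in> X \<and> dist a (g a) < \<epsilon>" using z Afin \<epsilon>(1) by (auto simp: g_def)
    have Bfin: "finite B" "B \<noteq> {}" "B \<subseteq> X" using Afin gA by (auto simp: B_def)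
    have "card B \<le> n" using card_image_le[OF Afin(1), of g] Afin(4) by (simp add: B_def)
    then have BF: "B \<in> Fn n X" using Bfin by (simp add: Fn_def)
    have "dH A B < \<epsilon>"
    proof (rule dH_less[OF Afin(1,2) Bfin(1,2)])
      show "\<forall>a\<in>A. \<exists>b\<in>B. dist a b < \<epsilon>" using gA by (auto simp: B_def)
      show "\<forall>b\<in>B. \<exists>a\<in>A. dist a b < \<epsilon>" using gA by (auto simp: B_def)
    qed
    then have BU: "B \<in> U" using \<epsilon>(2) BF by blast
    have far: "\<forall>q\<in>(f ^^ m) ` B. \<delta>/4 < dist p q"
    proof
      fix q assume "q \<in> (f ^^ m) ` B"
      then obtain a where a: "a \<in> A" "q = (f ^^ m) (g a)" by (auto simp: B_def)
      show "\<delta>/4 < dist p q"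
      proof (cases "dist ((f ^^ m) a) p \<le> \<delta>/4")
        case True
        then have "q = (f ^^ m) (z a)" using a by (simp add: g_def)
        moreover have "dist ((f ^^ m) (z a)) p > \<delta>/2" using z a by blast
        ultimately show ?thesis using \<delta> by (simp add: dist_commute)
      next
        case False
        then have "q = (f ^^ m) a" using a by (simp add: g_def)
        then show ?thesis using False by (simp add: dist_commute)
      qed
    qed
    have "\<delta>/4 < dH ((f ^^ m) ` A) ((f ^^ m) ` B)"
      by (rule dH_gtI[of _ _ p]) (use Afin Bfin a1 far in \<open>auto simp: p_def\<close>)
    then show "\<exists>x\<in>U. \<exists>y\<in>U. \<delta>/4 < dH ((Fnf f ^^ m) x) ((Fnf f ^^ m) y)"
      using A BU by (auto simp: Fnf_iter)
  qed
qed

lemma dir21: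
  assumes "cofinitely_sensitive (Fn n X) dH (Fnf f)" "n \<ge> 1"
  shows "cofinitely_sensitive X dist f"
proof -
  obtain \<delta> N where \<delta>: "\<delta> > 0" and H: "\<forall>U. D_open (Fn n X) dH U \<and> U \<noteq> {} \<longrightarrow>
        (\<forall>m>N. \<exists>x\<in>U. \<exists>y\<in>U. dH ((Fnf f ^^ m) x) ((Fnf f ^^ m) y) > \<delta>)"
    using assms unfolding cofinitely_sensitive_def by blast
  show ?thesis unfolding cofinitely_sensitive_def
  proof (intro exI[of _ "\<delta>"] conjI exI[of _ N] allI impI)
    show "\<delta> > 0" using \<delta> by simp
    fix V m assume V: "D_open X dist V \<and> V \<noteq> {}" and m: "N < m"
    define U where "U = {B\<in>Fn n X. B \<subseteq> V}"
    have VX: "V \<subseteq> X" using V by (simp add: D_open_def)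
    have "D_open (Fn n X) dH U"
      unfolding D_open_def
    proof (intro conjI ballI)
      show "U \<subseteq> Fn n X" by (auto simp: U_def)
      fix B assume B: "B \<in> U"
      have Bfin: "finite B" "B \<noteq> {}" "B \<subseteq> V" using B FnD by (auto simp: U_def)
      have "\<forall>b\<in>B. \<exists>e>0. \<forall>y\<in>X. dist b y < e \<longrightarrow> y \<in> V" using V Bfin unfolding D_open_def by blast
      then obtain e where e: "\<forall>b\<in>B. e b > 0 \<and> (\<forall>y\<in>X. dist b y < e b \<longrightarrow> y \<in> V)" by metis
      define \<epsilon> where "\<epsilon> = Min (e ` B)"
      have \<epsilon>pos: "\<epsilon> > 0" using e Bfin by (simp add: \<epsilon>_def)
      show "\<exists>\<epsilon>>0. \<forall>B'\<in>Fn n X. dH B B' < \<epsilon> \<longrightarrow> B' \<in> U"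
      proof (intro exI[of _ \<epsilon>] conjI ballI impI)
        show "\<epsilon> > 0" by (rule \<epsilon>pos)
        fix B' assume B': "B' \<in> Fn n X" "dH B B' < \<epsilon>"
        have B'fin: "finite B'" "B' \<noteq> {}" "B' \<subseteq> X" using FnD[OF B'(1)] by auto
        have "B' \<subseteq> V"
        proof
          fix b' assume b': "b' \<in> B'"
          obtain b where b: "b \<in> B" "dist b b' < \<epsilon>" using dH_lessD1[OF Bfin(1,2) B'fin(1,2) B'(2) b'] by blast
          have "\<epsilon> \<le> e b" using b(1) Bfin by (simp add: \<epsilon>_def)
          then show "b' \<in> V" using e b b' B'fin(3) by fastforce
        qed
        then show "B' \<in> U" using B' by (simp add: U_def)
      qed
    qed
    moreover have "U \<noteq> {}"
    proof -
      obtain v where v: "v \<in> V" using V by blast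
      then have "{v} \<in> U" using VX assms(2) by (auto simp: U_def Fn_def)
      then show ?thesis by blast
    qed
    ultimately have "\<exists>x\<in>U. \<exists>y\<in>U. dH ((Fnf f ^^ m) x) ((Fnf f ^^ m) y) > \<delta>"
      using H m by blast
    then obtain B1 B2 where B: "B1 \<in> U" "B2 \<in> U"
        "dH ((f ^^ m) ` B1) ((f ^^ m) ` B2) > \<delta>"
      by (auto simp: Fnf_iter)
    have B1f: "finite B1" "B1 \<noteq> {}" "B1 \<subseteq> V" using B(1) FnD by (auto simp: U_def)
    have B2f: "finite B2" "B2 \<noteq> {}" "B2 \<subseteq> V" using B(2) FnD by (auto simp: U_def)
    from dH_gtD[OF _ _ _ _ B(3)] B1f B2f
    have "(\<exists>a\<in>(f ^^ m) ` B1. \<forall>b\<in>(f ^^ m) ` B2. dist a b > \<delta>) \<or>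
          (\<exists>b\<in>(f ^^ m) ` B2. \<forall>a\<in>(f ^^ m) ` B1. dist a b > \<delta>)" by auto
    then show "\<exists>x\<in>V. \<exists>y\<in>V. dist ((f ^^ m) x) ((f ^^ m) y) > \<delta>"
    proof
      assume "\<exists>a\<in>(f ^^ m) ` B1. \<forall>b\<in>(f ^^ m) ` B2. dist a b > \<delta>"
      then obtain x where x: "x \<in> B1" "\<forall>b\<in>(f ^^ m) ` B2. dist ((f ^^ m) x) b > \<delta>" by blast
      obtain y where y: "y \<in> B2" using B2f by blast
      show ?thesis using x y B1f B2f by blast
    next
      assume "\<exists>b\<in>(f ^^ m) ` B2. \<forall>a\<in>(f ^^ m) ` B1. dist a b > \<delta>"
      then obtain y where y: "y \<in> B2" "\<forall>a\<in>(f ^^ m) ` B1. dist a ((f ^^ m) y) > \<delta>" by blast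
      obtain x where x: "x \<in> B1" using B1f by blast
      show ?thesis using x y B1f B2f by blast
    qed
  qed
qed


lemma nonsing_qmap:
  assumes "b1 \<in> B" "b2 \<in> B" "b1 \<noteq> b2"
  shows "qmap X B = {B}"
proof -
  have "B \<notin> F1 X" using assms by (auto simp: F1_def)
  then show ?thesis by (simp add: qmap_def)
qed

lemma dir32:
  assumes "cofinitely_sensitive (SFn n X) (rho X) (SFnf X f)" "connected X" "f ` X \<subseteq> X" "n \<ge> 2"
  shows "cofinitely_sensitive (Fn n X) dH (Fnf f)"
proof -
  obtain \<delta> N where \<delta>: "\<delta> > 0" and H: "\<forall>W. D_open (SFn n X) (rho X) W \<and> W \<noteq> {} \<longrightarrow>
        (\<forall>m>N. \<exists>x\<in>W. \<exists>y\<in>W. rho X ((SFnf X f ^^ m) x) ((SFnf X f ^^ m) y) > \<delta>)"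
    using assms unfolding cofinitely_sensitive_def by blast
  show ?thesis unfolding cofinitely_sensitive_def
  proof (intro exI[of _ "\<delta>"] conjI exI[of _ N] allI impI)
    show "\<delta> > 0" using \<delta> by simp
    fix U m assume U: "D_open (Fn n X) dH U \<and> U \<noteq> {}" and m: "N < m"
    have iterq: "\<And>A. A \<subseteq> X \<Longrightarrow> (SFnf X f ^^ m) (qmap X A) = qmap X ((f ^^ m) ` A)"
      using SFnf_iter[OF assms(3)] by blast
    have fimg: "\<And>A. A \<subseteq> X \<Longrightarrow> (f ^^ m) ` A \<subseteq> X" using funpow_in[OF assms(3)] by blast
    show "\<exists>x\<in>U. \<exists>y\<in>U. dH ((Fnf f ^^ m) x) ((Fnf f ^^ m) y) > \<delta>"
    proof (cases "\<exists>x0. X = {x0}")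
      case True
      then obtain x0 where X0: "X = {x0}" by blast
      have FnX: "Fn n X = {{x0}}"
      proof
        show "Fn n X \<subseteq> {{x0}}" by (auto simp: Fn_def X0 subset_singleton_iff)
        show "{{x0}} \<subseteq> Fn n X" using assms(4) by (auto simp: Fn_def X0)
      qed
      have SX: "SFn n X = {qmap X {x0}}" by (simp add: SFn_def FnX)
      have "D_open (SFn n X) (rho X) (SFn n X)" unfolding D_open_def using zero_less_one by blast
      moreover have "SFn n X \<noteq> {}" using SX by simp
      ultimately obtain c1 c2 where c: "c1 \<in> SFn n X" "c2 \<in> SFn n X"
          "rho X ((SFnf X f ^^ m) c1) ((SFnf X f ^^ m) c2) > \<delta>" using H m by blast
      then have "c1 = qmap X {x0}" "c2 = qmap X {x0}" using SX by auto
      then have "rho X (qmap X ((f ^^ m) ` {x0})) (qmap X ((f ^^ m) ` {x0})) > \<delta>"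
        using c(3) iterq[of "{x0}"] X0 by simp
      moreover have "rho X (qmap X ((f ^^ m) ` {x0})) (qmap X ((f ^^ m) ` {x0})) \<le> dH ((f ^^ m) ` {x0}) ((f ^^ m) ` {x0})"
        by (rule rho_le) auto
      moreover have "dH ((f ^^ m) ` {x0}) ((f ^^ m) ` {x0}) = 0" by (rule dH_self) auto
      ultimately show ?thesis using \<delta> by linarith
    next
      case False
      then have notsing: "\<And>x. X \<noteq> {x}" by blast
      obtain A where A: "A \<in> U" using U by blast
      have AF: "A \<in> Fn n X" using U A unfolding D_open_def by blast
      obtain \<epsilon> where \<epsilon>: "\<epsilon> > 0" "\<forall>B\<in>Fn n X. dH A B < \<epsilon> \<longrightarrow> B \<in> U"
        using U A unfolding D_open_def by blast
      have Afin: "finite A" "A \<noteq> {}" "A \<subseteq> X" "card A \<le> n" using FnD[OF AF] by auto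
      obtain A2 b1 b2 where A2: "A2 \<in> U" "b1 \<in> A2" "b2 \<in> A2" "b1 \<noteq> b2"
      proof (cases "\<exists>b1\<in>A. \<exists>b2\<in>A. b1 \<noteq> b2")
        case True
        then show ?thesis using that A by blast
      next
        case False
        obtain a where a: "a \<in> A" using Afin by blast
        then have Aa: "A = {a}" using False by blast
        have aX: "a \<in> X" using a Afin by blast
        have "a islimpt X" by (rule connected_imp_perfect[OF assms(2) aX notsing])
        then obtain b where b: "b \<in> X" "b \<noteq> a" "dist b a < \<epsilon>"
          using \<epsilon>(1) islimpt_approachable by blast
        have "card {a, b} \<le> n" using assms(4) b(2) by simp
        then have abF: "{a, b} \<in> Fn n X" using aX b(1) by (simp add: Fn_def)
        have "dH A {a, b} < \<epsilon>"
          by (rule dH_less) (use Aa \<epsilon>(1) b(3) in \<open>auto simp: dist_commute\<close>)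
        then have "{a, b} \<in> U" using \<epsilon>(2) abF by blast
        then show ?thesis using that[of "{a, b}" a b] b(2) by blast
      qed
      have Usub: "U \<subseteq> Fn n X" using U by (simp add: D_open_def)
      define W where "W = {{B} | B. B \<in> U \<and> (\<exists>b1\<in>B. \<exists>b2\<in>B. b1 \<noteq> b2)}"
      have WS: "W \<subseteq> SFn n X"
      proof
        fix c assume "c \<in> W"
        then obtain B b1 b2 where B: "c = {B}" "B \<in> U" "b1 \<in> B" "b2 \<in> B" "b1 \<noteq> b2"
          by (auto simp: W_def)
        then have "c = qmap X B" using nonsing_qmap by metis
        then show "c \<in> SFn n X" using B(2) Usub by (auto simp: SFn_def)
      qed
      have "D_open (SFn n X) (rho X) W"
        unfolding D_open_def
      proof (intro conjI ballI)
        show "W \<subseteq> SFn n X" by (rule WS)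
        fix c assume "c \<in> W"
        then obtain B b1 b2 where B: "c = {B}" "B \<in> U" "b1 \<in> B" "b2 \<in> B" "b1 \<noteq> b2"
          by (auto simp: W_def)
        obtain \<epsilon>B where \<epsilon>B: "\<epsilon>B > 0" "\<forall>C\<in>Fn n X. dH B C < \<epsilon>B \<longrightarrow> C \<in> U"
          using U B(2) unfolding D_open_def by blast
        have Bfin: "finite B" using B(2) Usub FnD by blast
        show "\<exists>e>0. \<forall>c'\<in>SFn n X. rho X c c' < e \<longrightarrow> c' \<in> W"
        proof (intro exI[of _ "min \<epsilon>B (dist b1 b2 / 2)"] conjI ballI impI)
          show "min \<epsilon>B (dist b1 b2 / 2) > 0" using \<epsilon>B(1) B(5) by simp
          fix c' assume c': "c' \<in> SFn n X" "rho X c c' < min \<epsilon>B (dist b1 b2 / 2)"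
          obtain C where C: "C \<in> Fn n X" "c' = qmap X C" using c'(1) by (auto simp: SFn_def)
          have Cfin: "finite C" "C \<noteq> {}" "C \<subseteq> X" using FnD[OF C(1)] by auto
          have r: "dH B C < min \<epsilon>B (dist b1 b2 / 2) \<and> C \<notin> F1 X"
            by (rule rho_gt[OF Bfin B(3,4,5) Cfin(1,2)]) (use c' C B(1) in auto)
          then have CU: "C \<in> U" using \<epsilon>B(2) C(1) by auto
          obtain c1 where c1: "c1 \<in> C" using Cfin by blast
          have "\<exists>c2\<in>C. c2 \<noteq> c1"
          proof (rule ccontr)
            assume "\<not> (\<exists>c2\<in>C. c2 \<noteq> c1)"
            then have "C = {c1}" using c1 by blast
            then have "C \<in> F1 X" using c1 Cfin(3) by (auto simp: F1_def)
            then show False using r by blast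
          qed
          then obtain c2 where c2: "c2 \<in> C" "c2 \<noteq> c1" by blast
          have "c' = {C}" using C(2) nonsing_qmap[OF c1 c2(1)] c2(2) by metis
          then show "c' \<in> W" using CU c1 c2 by (auto simp: W_def)
        qed
      qed
      moreover have "W \<noteq> {}" using A2 by (auto simp: W_def)
      ultimately obtain c1 c2 where c: "c1 \<in> W" "c2 \<in> W"
          "rho X ((SFnf X f ^^ m) c1) ((SFnf X f ^^ m) c2) > \<delta>" using H m by blast
      obtain B1 where B1: "c1 = {B1}" "B1 \<in> U" "\<exists>b1\<in>B1. \<exists>b2\<in>B1. b1 \<noteq> b2"
        using c(1) by (auto simp: W_def)
      obtain B2 where B2: "c2 = {B2}" "B2 \<in> U" "\<exists>b1\<in>B2. \<exists>b2\<in>B2. b1 \<noteq> b2"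
        using c(2) by (auto simp: W_def)
      have B1f: "finite B1" "B1 \<noteq> {}" "B1 \<subseteq> X" using B1(2) Usub FnD by blast+
      have B2f: "finite B2" "B2 \<noteq> {}" "B2 \<subseteq> X" using B2(2) Usub FnD by blast+
      have "c1 = qmap X B1" using B1(1,3) nonsing_qmap by metis
      moreover have "c2 = qmap X B2" using B2(1,3) nonsing_qmap by metis
      ultimately have "rho X (qmap X ((f ^^ m) ` B1)) (qmap X ((f ^^ m) ` B2)) > \<delta>"
        using c(3) iterq B1f(3) B2f(3) by simp
      moreover have "rho X (qmap X ((f ^^ m) ` B1)) (qmap X ((f ^^ m) ` B2))
          \<le> dH ((f ^^ m) ` B1) ((f ^^ m) ` B2)"
        by (rule rho_le) (use B1f B2f in auto)
      ultimately have "dH ((Fnf f ^^ m) B1) ((Fnf f ^^ m) B2) > \<delta>" by (simp add: Fnf_iter)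
      then show ?thesis using B1(2) B2(2) by blast
    qed
  qed
qed

theorem theorem2:
  fixes X :: "'a::metric_space set" and f :: "'a \<Rightarrow> 'a" and n :: nat
  assumes "compact X" and "connected X" and "X \<noteq> {}"
    and "continuous_on X f" and "f ` X \<subseteq> X"
    and "n \<ge> 2"
  shows "(cofinitely_sensitive X dist f \<longleftrightarrow> cofinitely_sensitive (Fn n X) dH (Fnf f))
       \<and> (cofinitely_sensitive (SFn n X) (rho X) (SFnf X f)
            \<longrightarrow> cofinitely_sensitive (Fn n X) dH (Fnf f))"
  using dir12[of X f n] dir21[of n X f] dir32[of n X f] assms by auto

end
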